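(* Let $k_+,k_-$ be integers with $0\leq k_- \leq k_+ \leq 3$ and $k_++k_-\geq 1$. There is an infinite family of integers $n$ such that $\mathbb{Z}^n$ can be lattice packed by $\mathcal{B}(n,2,k_+,k_-)$ with density $\delta=\Omega(c^{-\sqrt{\ln n}})$ for some real number $c>0$.
   Context: $\mathcal{B}(n,t,k_+,k_-)=\{\mathbf{x}\in\mathbb{Z}^n : -k_-\le x_i\le k_+ \text{ for all } i,\ \mathrm{wt}(\mathbf{x})\le t\}$, where $\mathrm{wt}$ is the Hamming weight. A lattice packing of $\mathbb{Z}^n$ by $\mathcal{B}$ is a lattice $\Lambda\subseteq\mathbb{Z}^n$ (additive subgroup) such that the translates $\mathbf{v}+\mathcal{B}$, $\mathbf{v}\in\Lambda$, are pairwise disjoint; its density is $|\mathcal{B}|/\mathrm{vol}(\Lambda)$, where $\mathrm{vol}(\Lambda)=|\mathbb{Z}^n/\Lambda|$. The asymptotic notation refers to $n\to\infty$ along the family. *)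

theory Defs
  imports Complex_Main
begin

text \<open>Vectors of Z^n are represented as functions nat => int vanishing outside {0..<n}.\<close>
definition zvecs :: "nat \<Rightarrow> (nat \<Rightarrow> int) set" where
  "zvecs n = {x. \<forall>i. n \<le> i \<longrightarrow> x i = 0}"

definition vadd :: "(nat \<Rightarrow> int) \<Rightarrow> (nat \<Rightarrow> int) \<Rightarrow> (nat \<Rightarrow> int)" where
  "vadd x y = (\<lambda>i. x i + y i)"

definition vneg :: "(nat \<Rightarrow> int) \<Rightarrow> (nat \<Rightarrow> int)" where
  "vneg x = (\<lambda>i. - x i)"

definition hwt :: "nat \<Rightarrow> (nat \<Rightarrow> int) \<Rightarrow> nat" where
  "hwt n x = card {i. i < n \<and> x i \<noteq> 0}"

definition errball :: "nat \<Rightarrow> nat \<Rightarrow> int \<Rightarrow> int \<Rightarrow> (nat \<Rightarrow> int) set" where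
  "errball n t kp km = {x \<in> zvecs n. (\<forall>i<n. - km \<le> x i \<and> x i \<le> kp) \<and> hwt n x \<le> t}"

definition is_lattice :: "nat \<Rightarrow> (nat \<Rightarrow> int) set \<Rightarrow> bool" where
  "is_lattice n L \<longleftrightarrow> L \<subseteq> zvecs n \<and> (\<lambda>i. 0) \<in> L \<and>
     (\<forall>x\<in>L. \<forall>y\<in>L. vadd x y \<in> L) \<and> (\<forall>x\<in>L. vneg x \<in> L)"

text \<open>vol(L) = |Z^n / L| (number of cosets).\<close>
definition lattice_index :: "nat \<Rightarrow> (nat \<Rightarrow> int) set \<Rightarrow> nat" where
  "lattice_index n L = card (zvecs n // {(x, y). x \<in> zvecs n \<and> y \<in> zvecs n \<and> vadd x (vneg y) \<in> L})"

definition finite_index :: "nat \<Rightarrow> (nat \<Rightarrow> int) set \<Rightarrow> bool" where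
  "finite_index n L \<longleftrightarrow> finite (zvecs n // {(x, y). x \<in> zvecs n \<and> y \<in> zvecs n \<and> vadd x (vneg y) \<in> L})"

definition lattice_packing :: "nat \<Rightarrow> nat \<Rightarrow> int \<Rightarrow> int \<Rightarrow> (nat \<Rightarrow> int) set \<Rightarrow> bool" where
  "lattice_packing n t kp km L \<longleftrightarrow> is_lattice n L \<and> finite_index n L \<and>
     (\<forall>v\<in>L. \<forall>w\<in>L. v \<noteq> w \<longrightarrow>
        (vadd v) ` errball n t kp km \<inter> (vadd w) ` errball n t kp km = {})"

definition packing_density :: "nat \<Rightarrow> nat \<Rightarrow> int \<Rightarrow> int \<Rightarrow> (nat \<Rightarrow> int) set \<Rightarrow> real" where
  "packing_density n t kp km L = real (card (errball n t kp km)) / real (lattice_index n L)"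

end

theory Submission
  imports Defs "HOL-Number_Theory.Number_Theory" "HOL-Library.FuncSet"
begin

lemma fermat_int:
  fixes p :: nat and a :: int
  assumes "prime p" "\<not> int p dvd a"
  shows "[a^(p-1) = 1] (mod int p)"
proof -
  define b where "b = nat (a mod int p)"
  have p0: "int p > 0" using assms(1) prime_gt_0_nat by auto
  have bi: "int b = a mod int p" unfolding b_def using p0 by simp
  have "\<not> p dvd b"
  proof
    assume "p dvd b"
    then have "int p dvd int b" by simp
    then have "int p dvd a mod int p" using bi by simp
    then show False using assms(2) by (simp add: dvd_mod_iff)
  qed
  then have "[b^(p-1) = 1] (mod p)" using fermat_theorem assms(1) by blast
  then have "[int b^(p-1) = 1] (mod int p)"
    by (metis cong_int_iff of_nat_1 of_nat_power)
  moreover have "[a = int b] (mod int p)" using bi by (simp add: cong_def)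
  then have "[a^(p-1) = int b^(p-1)] (mod int p)" by (rule cong_pow)
  ultimately show ?thesis using cong_trans by blast
qed

lemma qnr3:
  fixes p :: nat and i u w :: int
  assumes pp: "prime p" and p3: "p mod 3 = 2" and p5: "p > 3"
    and ii: "[i^2 = -1] (mod int p)"
    and h: "[3*u^2 = 4*w^2] (mod int p)"
  shows "int p dvd u"
proof (rule ccontr)
  assume nu: "\<not> int p dvd u"
  have ppi: "prime (int p)" using pp by simp
  define T where "T = 2*w*i"
  define Om where "Om = T - u"
  define V where "V = 2*u"
  have "[T^2 = 4*w^2*i^2] (mod int p)" unfolding T_def by (simp add: power_mult_distrib cong_refl)
  moreover have "[4*w^2*i^2 = 4*w^2*(-1)] (mod int p)" using cong_mult[OF cong_refl ii, of "4*w^2"] by simp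
  ultimately have "[T^2 = - (4*w^2)] (mod int p)" using cong_trans by fastforce
  moreover have "[- (4*w^2) = -(3*u^2)] (mod int p)" using h by (metis cong_minus_minus_iff cong_sym)
  ultimately have T2: "[T^2 = -(3*u^2)] (mod int p)" using cong_trans by blast
  have e1: "Om^2 + Om*V + V^2 = T^2 + 3*u^2" unfolding Om_def V_def by (simp add: algebra_simps power2_eq_square)
  have "[T^2 + 3*u^2 = -(3*u^2) + 3*u^2] (mod int p)" using T2 cong_add cong_refl by blast
  then have Q0: "[Om^2 + Om*V + V^2 = 0] (mod int p)" using e1 by simp
  have p2: "\<not> int p dvd 2"
  proof
    assume "int p dvd 2"
    then have "p dvd 2" by presburger
    then have "p \<le> 2" by (simp add: dvd_imp_le)
    then show False using p5 by simp
  qed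
  have nV: "\<not> int p dvd V" unfolding V_def using nu p2 ppi prime_dvd_mult_iff by blast
  have nO: "\<not> int p dvd Om"
  proof
    assume "int p dvd Om"
    then have "int p dvd Om^2 + Om*V" by (simp add: power2_eq_square)
    moreover have "int p dvd Om^2 + Om*V + V^2" using Q0 by (simp add: cong_0_iff)
    ultimately have "int p dvd V^2" by (metis dvd_add_right_iff)
    then show False using nV ppi prime_dvd_power by blast
  qed
  have "Om^3 - V^3 = (Om - V)*(Om^2 + Om*V + V^2)" by (simp add: algebra_simps power2_eq_square power3_eq_cube)
  then have "int p dvd Om^3 - V^3" using Q0 by (simp add: cong_0_iff)
  then have O3: "[Om^3 = V^3] (mod int p)" by (simp add: cong_iff_dvd_diff)
  define k where "k = (p - 1) div 3"
  have pk: "p - 1 = 3*k + 1" unfolding k_def using p3 by presburger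
  have "[Om^(p-1) = 1] (mod int p)" using fermat_int pp nO by blast
  moreover have "Om^(p-1) = (Om^3)^k * Om" using pk by (simp add: power_mult power_add)
  moreover have "[(Om^3)^k * Om = (V^3)^k * Om] (mod int p)" using O3 by (simp add: cong_mult cong_pow cong_refl)
  ultimately have A: "[(V^3)^k * Om = 1] (mod int p)" by (metis cong_sym cong_trans)
  have "[V^(p-1) = 1] (mod int p)" using fermat_int pp nV by blast
  moreover have "V^(p-1) = (V^3)^k * V" using pk by (simp add: power_mult power_add)
  ultimately have B: "[(V^3)^k * V = 1] (mod int p)" by simp
  have "[(V^3)^k * Om = (V^3)^k * V] (mod int p)" using A B by (metis cong_sym cong_trans)
  moreover have "coprime ((V^3)^k) (int p)"
  proof -
    have "coprime (int p) V" using nV ppi by (simp add: prime_imp_coprime)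
    then have "coprime V (int p)" by (simp add: coprime_commute)
    then show ?thesis by simp
  qed
  ultimately have OV: "[Om = V] (mod int p)" using cong_mult_lcancel by blast
  have "[Om^2 + Om*V + V^2 = V^2 + V*V + V^2] (mod int p)"
    by (intro cong_add cong_mult cong_pow OV cong_refl)
  moreover have "V^2 + V*V + V^2 = 3*V^2" by (simp add: power2_eq_square)
  ultimately have "[3*V^2 = 0] (mod int p)" using Q0 by (metis cong_sym cong_trans)
  then have "int p dvd 3 * V^2" by (simp add: cong_0_iff)
  then have "int p dvd 3 \<or> int p dvd V^2" using ppi prime_dvd_mult_iff by blast
  moreover have "\<not> int p dvd 3"
  proof
    assume "int p dvd 3"
    then have "p dvd 3" by presburger
    then have "p \<le> 3" by (simp add: dvd_imp_le)
    then show False using p5 by simp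
  qed
  ultimately show False using nV ppi prime_dvd_power by blast
qed

lemma all_factors_1mod3:
  fixes N :: nat
  shows "N \<ge> 1 \<Longrightarrow> (\<forall>q. prime q \<longrightarrow> q dvd N \<longrightarrow> q mod 3 = 1) \<Longrightarrow> N mod 3 = 1"
proof (induction N rule: less_induct)
  case (less N)
  show ?case
  proof (cases "N = 1")
    case True then show ?thesis by simp
  next
    case False
    then obtain q where q: "prime q" "q dvd N" using prime_factor_nat by blast
    then obtain N' where N': "N = q * N'" by blast
    have q2: "q \<ge> 2" using q prime_ge_2_nat by blast
    have "N' \<ge> 1" using less.prems N' by (cases N') auto
    then have "N' < N" using N' q2 by simp
    moreover have "\<forall>r. prime r \<longrightarrow> r dvd N' \<longrightarrow> r mod 3 = 1" using less.prems N' by auto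
    ultimately have "N' mod 3 = 1" using less.IH \<open>N' \<ge> 1\<close> by blast
    moreover have "q mod 3 = 1" using less.prems q by blast
    ultimately show ?thesis using N' by (simp add: mod_mult_eq[symmetric])
  qed
qed

lemma good_primes:
  fixes K :: nat
  shows "\<exists>p. prime p \<and> K < p \<and> p mod 3 = 2 \<and> (\<exists>i::int. [i^2 = -1] (mod int p))"
proof -
  define S where "S = {j \<in> {1..K}. \<not> 3 dvd j}"
  define a where "a = (\<Prod>j\<in>S. j)"
  have fS: "finite S" unfolding S_def by simp
  have a3: "\<not> 3 dvd a"
  proof
    assume "3 dvd a"
    then obtain j where "j \<in> S" "3 dvd j" using prime_dvd_prod_iff[where p="3::nat" and A=S and f="\<lambda>j. j"] fS unfolding a_def by auto
    then show False unfolding S_def by auto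
  qed
  define N where "N = a^2 + 1"
  have "a mod 3 = 1 \<or> a mod 3 = 2" using a3 by presburger
  moreover have "(a*a) mod 3 = ((a mod 3)*(a mod 3)) mod 3" by (simp add: mod_mult_eq)
  ultimately have "(a*a) mod 3 = 1" by auto
  then have N3: "N mod 3 = 2" unfolding N_def by (simp add: power2_eq_square mod_Suc)
  have "\<not> (\<forall>q. prime q \<longrightarrow> q dvd N \<longrightarrow> q mod 3 = 1)"
    using all_factors_1mod3[of N] N3 unfolding N_def by auto
  then obtain q where q: "prime q" "q dvd N" "q mod 3 \<noteq> 1" by blast
  have q3: "q mod 3 = 2"
  proof -
    have "q mod 3 \<noteq> 0"
    proof
      assume "q mod 3 = 0"
      then have "3 dvd q" by presburger
      then have "q = 3" using q(1) numeral_eq_one_iff prime_nat_iff by blast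
      then show False using q(2) N3 by presburger
    qed
    then show ?thesis using q(3) by presburger
  qed
  have qK: "K < q"
  proof (rule ccontr)
    assume "\<not> K < q"
    then have "q \<in> S" unfolding S_def using q(1) q3 prime_ge_1_nat[of q] by auto
    then have "q dvd a" unfolding a_def using fS dvd_prodI[of S q "\<lambda>j. j"] by simp
    then have "q dvd a^2" by (simp add: power2_eq_square)
    then have "q dvd 1" using q(2) unfolding N_def using dvd_add_right_iff by blast
    then show False using q(1) by simp
  qed
  have "[int a^2 = -1] (mod int q)"
  proof -
    have "int q dvd int a^2 + 1" using q(2) unfolding N_def by (metis of_nat_1 of_nat_add of_nat_dvd_iff of_nat_power)
    then show ?thesis by (simp add: cong_iff_dvd_diff)
  qed
  then show ?thesis using q(1) qK q3 by blast
qed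

lemma dvd_small_zero:
  fixes t P :: int
  assumes "P dvd t" "\<bar>t\<bar> < P"
  shows "t = 0"
proof (rule ccontr)
  assume "t \<noteq> 0"
  then have "\<bar>P\<bar> \<le> \<bar>t\<bar>" using dvd_imp_le_int assms(1) by blast
  then show False using assms(2) by linarith
qed

lemma wts_enum:
  fixes a b c d :: int
  assumes "a \<in> {1,2,3}" "b \<in> {1,2,3}" "c \<in> {1,2,3}" "d \<in> {1,2,3}" "a + b = c + d"
  shows "(a = c \<and> b = d) \<or> (a = d \<and> b = c) \<or> (a*b = 3 \<and> c*d = 4) \<or> (a*b = 4 \<and> c*d = 3)"
  using assms by (elim insertE emptyE; simp)

lemma caseA:
  fixes p :: nat and a b x1 x2 y1 y2 M :: int and S :: "int set"
  assumes pp: "prime p" and p12: "int p > 12"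
    and wa: "a \<in> {1,2,3}" and wb: "b \<in> {1,2,3}"
    and lin: "a*x1 + b*x2 = a*y1 + b*y2"
    and qd: "[a*b*(x1-x2)^2 = a*b*(y1-y2)^2] (mod int p)"
    and rng: "0 \<le> x1" "x1 < M" "0 \<le> x2" "x2 < M" "0 \<le> y1" "y1 < M" "0 \<le> y2" "y2 < M"
    and pM: "2*M < int p"
    and dist: "x1 \<noteq> x2" "x1 \<noteq> y1" "x1 \<noteq> y2" "x2 \<noteq> y1" "x2 \<noteq> y2" "y1 \<noteq> y2"
    and S: "x1 \<in> S" "x2 \<in> S" "y1 \<in> S" "y2 \<in> S"
    and conv: "\<forall>c1 c2 x y z. x \<in> S \<longrightarrow> y \<in> S \<longrightarrow> z \<in> S \<longrightarrow> 0 \<le> c1 \<longrightarrow> 0 \<le> c2 \<longrightarrow>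
        c1 + c2 \<le> 12 \<longrightarrow> (c1+c2)*z = c1*x + c2*y \<longrightarrow> 0 < c1 \<longrightarrow> x = z"
  shows False
proof -
  have ppi: "prime (int p)" using pp by simp
  have ab: "0 < a*b" "a*b \<le> 9" using wa wb by auto
  have "coprime (a*b) (int p)"
  proof -
    have "\<not> int p dvd a*b"
    proof
      assume "int p dvd a*b"
      then have "\<bar>int p\<bar> \<le> \<bar>a*b\<bar>" using dvd_imp_le_int[of "a*b" "int p"] ab by linarith
      then show False using ab p12 by linarith
    qed
    then have "coprime (int p) (a*b)" using ppi prime_imp_coprime by blast
    then show ?thesis by (simp add: coprime_commute)
  qed
  then have "[(x1-x2)^2 = (y1-y2)^2] (mod int p)" using qd cong_mult_lcancel[of "a*b" "int p"] by (simp add: mult.assoc)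
  then have "int p dvd (x1-x2)^2 - (y1-y2)^2" by (simp add: cong_iff_dvd_diff)
  moreover have "(x1-x2)^2 - (y1-y2)^2 = ((x1-x2)-(y1-y2))*((x1-x2)+(y1-y2))" by (simp add: algebra_simps power2_eq_square)
  ultimately have "int p dvd ((x1-x2)-(y1-y2)) * ((x1-x2)+(y1-y2))" by simp
  then have "int p dvd ((x1-x2)-(y1-y2)) \<or> int p dvd ((x1-x2)+(y1-y2))"
    using prime_dvd_mult_iff[OF ppi] by blast
  then have "(x1-x2)-(y1-y2) = 0 \<or> (x1-x2)+(y1-y2) = 0"
  proof
    assume "int p dvd ((x1-x2)-(y1-y2))"
    then have "(x1-x2)-(y1-y2) = 0" by (rule dvd_small_zero) (use rng pM in linarith)
    then show ?thesis by simp
  next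
    assume "int p dvd ((x1-x2)+(y1-y2))"
    then have "(x1-x2)+(y1-y2) = 0" by (rule dvd_small_zero) (use rng pM in linarith)
    then show ?thesis by simp
  qed
  then show False
  proof
    assume h: "(x1-x2)-(y1-y2) = 0"
    then have "x2 - y2 = x1 - y1" by simp
    have "a*(x1-y1) + b*(x2-y2) = 0" using lin by (simp add: algebra_simps)
    then have "(a+b)*(x1-y1) = 0" using \<open>x2 - y2 = x1 - y1\<close> by (simp add: algebra_simps)
    then have "x1 = y1" using wa wb by auto
    then show False using dist by simp
  next
    assume h: "(x1-x2)+(y1-y2) = 0"
    then have hx2: "x2 = x1 + y1 - y2" by simp
    show False
    proof (cases "b \<le> a")
      case True
      have "(2*b + (a-b))*x1 = (2*b)*y2 + (a-b)*y1" using lin unfolding hx2 by (simp add: algebra_simps)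
      moreover have "0 \<le> 2*b" "0 \<le> a-b" "2*b + (a-b) \<le> 12" "0 < 2*b" using True wa wb by auto
      ultimately have "y2 = x1" using conv[rule_format, of y2 y1 x1 "2*b" "a-b"] S by blast
      then show False using dist by simp
    next
      case False
      have "(2*a + (b-a))*x2 = (2*a)*y1 + (b-a)*y2" using lin unfolding hx2 by (simp add: algebra_simps)
      moreover have "0 \<le> 2*a" "0 \<le> b-a" "2*a + (b-a) \<le> 12" "0 < 2*a" using False wa wb by auto
      ultimately have "y1 = x2" using conv[rule_format, of y1 y2 x2 "2*a" "b-a"] S by blast
      then show False using dist by simp
    qed
  qed
qed


lemma quad:
  fixes p :: nat and i a b c d x1 x2 y1 y2 M :: int and S :: "int set"
  assumes pp: "prime p" and p3: "p mod 3 = 2" and p12: "int p > 12"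
    and ii: "[i^2 = -1] (mod int p)"
    and wa: "a \<in> {1,2,3}" and wb: "b \<in> {1,2,3}" and wc: "c \<in> {1,2,3}" and wd: "d \<in> {1,2,3}"
    and sm: "a + b = c + d"
    and lin: "a*x1 + b*x2 = c*y1 + d*y2"
    and qd: "[a*x1^2 + b*x2^2 = c*y1^2 + d*y2^2] (mod int p)"
    and rng: "0 \<le> x1" "x1 < M" "0 \<le> x2" "x2 < M" "0 \<le> y1" "y1 < M" "0 \<le> y2" "y2 < M"
    and pM: "2*M < int p"
    and dist: "x1 \<noteq> x2" "x1 \<noteq> y1" "x1 \<noteq> y2" "x2 \<noteq> y1" "x2 \<noteq> y2" "y1 \<noteq> y2"
    and S: "x1 \<in> S" "x2 \<in> S" "y1 \<in> S" "y2 \<in> S"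
    and conv: "\<forall>c1 c2 x y z. x \<in> S \<longrightarrow> y \<in> S \<longrightarrow> z \<in> S \<longrightarrow> 0 \<le> c1 \<longrightarrow> 0 \<le> c2 \<longrightarrow>
        c1 + c2 \<le> 12 \<longrightarrow> (c1+c2)*z = c1*x + c2*y \<longrightarrow> 0 < c1 \<longrightarrow> x = z"
  shows False
proof -
  have idx: "(a+b)*(a*x1^2+b*x2^2) - (a*x1+b*x2)^2 = a*b*(x1-x2)^2"
    by (simp add: algebra_simps power2_eq_square)
  have idy: "(c+d)*(c*y1^2+d*y2^2) - (c*y1+d*y2)^2 = c*d*(y1-y2)^2"
    by (simp add: algebra_simps power2_eq_square)
  have "[(a+b)*(a*x1^2+b*x2^2) - (a*x1+b*x2)^2 = (a+b)*(c*y1^2+d*y2^2) - (a*x1+b*x2)^2] (mod int p)"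
    by (intro cong_diff cong_mult cong_refl qd)
  then have K: "[a*b*(x1-x2)^2 = c*d*(y1-y2)^2] (mod int p)" using idx idy sm lin by simp
  have p3': "p > 3" using p12 by simp
  have "(a = c \<and> b = d) \<or> (a = d \<and> b = c) \<or> (a*b = 3 \<and> c*d = 4) \<or> (a*b = 4 \<and> c*d = 3)"
    using wts_enum[OF wa wb wc wd sm] .
  then show False
  proof (elim disjE conjE)
    assume "a = c" "b = d"
    then show False using caseA[OF pp p12 wa wb _ _ rng pM dist S conv] lin K by simp
  next
    assume h: "a = d" "b = c"
    have "(y1-y2)^2 = (y2-y1)^2" by (simp add: power2_eq_square algebra_simps)
    then have K': "[a*b*(x1-x2)^2 = a*b*(y2-y1)^2] (mod int p)" using K h by (simp add: mult.commute)
    have lin': "a*x1 + b*x2 = a*y2 + b*y1" using lin h by simp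
    show False by (rule caseA[OF pp p12 wa wb lin' K', of M S]) (use rng pM dist S conv in blast)+
  next
    assume "a*b = 3" "c*d = 4"
    then have "[3*(x1-x2)^2 = 4*(y1-y2)^2] (mod int p)" using K by simp
    then have "int p dvd (x1-x2)" using qnr3[OF pp p3 p3' ii] by blast
    then have "x1 - x2 = 0" by (rule dvd_small_zero) (use rng pM in linarith)
    then show False using dist by simp
  next
    assume "a*b = 4" "c*d = 3"
    then have "[3*(y1-y2)^2 = 4*(x1-x2)^2] (mod int p)" using K by (simp add: cong_sym)
    then have "int p dvd (y1-y2)" using qnr3[OF pp p3 p3' ii] by blast
    then have "y1 - y2 = 0" by (rule dvd_small_zero) (use rng pM in linarith)
    then show False using dist by simp
  qed
qed

definition enc :: "nat \<Rightarrow> nat \<Rightarrow> (nat \<Rightarrow> nat) \<Rightarrow> nat" where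
  "enc B D v = (\<Sum>j<D. v j * B^j)"

lemma digits_unique:
  fixes B :: nat
  shows "(\<forall>j<D. c j < B) \<Longrightarrow> (\<forall>j<D. c' j < B) \<Longrightarrow>
    (\<Sum>j<D. c j * B^j) = (\<Sum>j<D. c' j * B^j) \<Longrightarrow> \<forall>j<D. c j = c' j"
proof (induction D arbitrary: c c')
  case 0 then show ?case by simp
next
  case (Suc D)
  have B0: "B > 0" using Suc.prems(1) by auto
  have split: "\<And>c. (\<Sum>j<Suc D. c j * B^j) = c 0 + B * (\<Sum>j<D. c (Suc j) * B^j)"
    unfolding sum.lessThan_Suc_shift by (simp add: sum_distrib_left mult.left_commute)
  have eq: "c 0 + B * (\<Sum>j<D. c (Suc j) * B^j) = c' 0 + B * (\<Sum>j<D. c' (Suc j) * B^j)"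
    using Suc.prems(3) split by metis
  have c0: "c 0 < B" "c' 0 < B" using Suc.prems by auto
  have "(c 0 + B * (\<Sum>j<D. c (Suc j) * B^j)) mod B = c 0" using c0 by simp
  moreover have "(c' 0 + B * (\<Sum>j<D. c' (Suc j) * B^j)) mod B = c' 0" using c0 by simp
  ultimately have e0: "c 0 = c' 0" using eq by metis
  then have "B * (\<Sum>j<D. c (Suc j) * B^j) = B * (\<Sum>j<D. c' (Suc j) * B^j)" using eq by simp
  then have "(\<Sum>j<D. c (Suc j) * B^j) = (\<Sum>j<D. c' (Suc j) * B^j)" using B0 by simp
  moreover have "\<forall>j<D. c (Suc j) < B" using Suc.prems(1) by simp
  moreover have "\<forall>j<D. c' (Suc j) < B" using Suc.prems(2) by simp
  ultimately have S: "\<forall>j<D. c (Suc j) = c' (Suc j)"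
    using Suc.IH[of "\<lambda>j. c (Suc j)" "\<lambda>j. c' (Suc j)"] by blast
  show ?case
  proof (intro allI impI)
    fix j assume "j < Suc D"
    then show "c j = c' j" using S e0 by (cases j) auto
  qed
qed

lemma enc_lt:
  fixes B :: nat
  shows "(\<forall>j<D. v j < B) \<Longrightarrow> enc B D v < B^D"
proof (induction D)
  case 0 then show ?case by (simp add: enc_def)
next
  case (Suc D)
  have "enc B (Suc D) v = enc B D v + v D * B^D" by (simp add: enc_def)
  moreover have "enc B D v < B^D" using Suc by simp
  moreover have "v D * B^D \<le> (B - 1) * B^D" using Suc.prems by (intro mult_right_mono) auto
  moreover have "B^D + (B-1)*B^D = B^Suc D" using Suc.prems by (cases B) (auto simp: algebra_simps)
  ultimately show ?case by linarith
qed

lemma sphere_identity: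
  fixes I :: "'a set" and w :: "'a \<Rightarrow> nat" and v :: "'a \<Rightarrow> nat \<Rightarrow> nat" and u :: "nat \<Rightarrow> nat"
  assumes fI: "finite I"
    and sph: "\<forall>i\<in>I. (\<Sum>j<D. (v i j)^2) = r" "(\<Sum>j<D. (u j)^2) = r"
    and key: "\<forall>j<D. (\<Sum>i\<in>I. w i * v i j) = (\<Sum>i\<in>I. w i) * u j"
  shows "(\<Sum>i\<in>I. int (w i) * (\<Sum>j<D. (int (v i j) - int (u j))^2)) = 0"
proof -
  have sphi: "\<forall>i\<in>I. (\<Sum>j<D. (int (v i j))^2) = int r"
  proof
    fix i assume "i \<in> I"
    then have "int (\<Sum>j<D. (v i j)^2) = int r" using sph(1) by simp
    then show "(\<Sum>j<D. (int (v i j))^2) = int r" by simp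
  qed
  have sphu: "(\<Sum>j<D. (int (u j))^2) = int r"
  proof -
    have "int (\<Sum>j<D. (u j)^2) = int r" using sph(2) by simp
    then show ?thesis by simp
  qed
  have keyi: "\<forall>j<D. (\<Sum>i\<in>I. int (w i) * int (v i j)) = (\<Sum>i\<in>I. int (w i)) * int (u j)"
  proof (intro allI impI)
    fix j assume "j < D"
    then have "int (\<Sum>i\<in>I. w i * v i j) = int ((\<Sum>i\<in>I. w i) * u j)" using key by simp
    then show "(\<Sum>i\<in>I. int (w i) * int (v i j)) = (\<Sum>i\<in>I. int (w i)) * int (u j)" by simp
  qed
  have step1: "\<And>i. i \<in> I \<Longrightarrow> (\<Sum>j<D. (int (v i j) - int (u j))^2) = 2 * int r - 2 * (\<Sum>j<D. int (v i j) * int (u j))"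
  proof -
    fix i assume "i \<in> I"
    have "(\<Sum>j<D. (int (v i j) - int (u j))^2) = (\<Sum>j<D. (int (v i j))^2) - 2 * (\<Sum>j<D. int (v i j) * int (u j)) + (\<Sum>j<D. (int (u j))^2)"
      by (simp add: power2_diff sum.distrib sum_subtractf sum_distrib_left mult.assoc)
    then show "(\<Sum>j<D. (int (v i j) - int (u j))^2) = 2 * int r - 2 * (\<Sum>j<D. int (v i j) * int (u j))"
      using sphi \<open>i \<in> I\<close> sphu by simp
  qed
  have "(\<Sum>i\<in>I. int (w i) * (\<Sum>j<D. (int (v i j) - int (u j))^2))
      = (\<Sum>i\<in>I. int (w i) * (2 * int r - 2 * (\<Sum>j<D. int (v i j) * int (u j))))"
    using step1 by simp
  also have "\<dots> = 2 * int r * (\<Sum>i\<in>I. int (w i)) - 2 * (\<Sum>i\<in>I. \<Sum>j<D. int (w i) * int (v i j) * int (u j))"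
    by (simp add: algebra_simps sum_subtractf sum_distrib_left sum_distrib_right)
  also have "(\<Sum>i\<in>I. \<Sum>j<D. int (w i) * int (v i j) * int (u j)) = (\<Sum>j<D. (\<Sum>i\<in>I. int (w i) * int (v i j)) * int (u j))"
    by (subst sum.swap) (simp add: sum_distrib_right)
  also have "\<dots> = (\<Sum>j<D. (\<Sum>i\<in>I. int (w i)) * int (u j) * int (u j))"
    using keyi by simp
  also have "\<dots> = (\<Sum>i\<in>I. int (w i)) * (\<Sum>j<D. (int (u j))^2)"
    by (simp add: sum_distrib_left power2_eq_square mult.assoc)
  also have "\<dots> = (\<Sum>i\<in>I. int (w i)) * int r" using sphu by simp
  finally show ?thesis by simp
qed

lemma behrend:
  fixes I :: "'a set" and w :: "'a \<Rightarrow> nat" and v :: "'a \<Rightarrow> nat \<Rightarrow> nat" and u :: "nat \<Rightarrow> nat"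
  assumes fI: "finite I"
    and vI: "\<forall>i\<in>I. v i \<in> PiE {..<D} (\<lambda>_. {..<d})" and uV: "u \<in> PiE {..<D} (\<lambda>_. {..<d})"
    and sph: "\<forall>i\<in>I. (\<Sum>j<D. (v i j)^2) = r" "(\<Sum>j<D. (u j)^2) = r"
    and Bd: "(\<Sum>i\<in>I. w i) * d \<le> B" and B0: "B > 0" and d1: "d \<ge> 1"
    and eq: "(\<Sum>i\<in>I. w i * enc B D (v i)) = (\<Sum>i\<in>I. w i) * enc B D u"
  shows "\<forall>i\<in>I. w i > 0 \<longrightarrow> v i = u"
proof -
  define W where "W = (\<Sum>i\<in>I. w i)"
  have lt: "W * (d - 1) < B"
  proof (cases "W = 0")
    case True then show ?thesis using B0 by simp
  next
    case False
    then have "W * (d-1) < W * d" using d1 by simp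
    moreover have "W * d \<le> B" using Bd W_def by simp
    ultimately show ?thesis by linarith
  qed
  have L: "(\<Sum>i\<in>I. w i * enc B D (v i)) = (\<Sum>j<D. (\<Sum>i\<in>I. w i * v i j) * B^j)"
    unfolding enc_def by (simp add: sum_distrib_left sum_distrib_right mult.assoc) (rule sum.swap)
  have R: "W * enc B D u = (\<Sum>j<D. (W * u j) * B^j)"
    unfolding enc_def by (simp add: sum_distrib_left mult.assoc)
  have bl: "\<forall>j<D. (\<Sum>i\<in>I. w i * v i j) < B"
  proof (intro allI impI)
    fix j assume "j < D"
    have "(\<Sum>i\<in>I. w i * v i j) \<le> (\<Sum>i\<in>I. w i * (d-1))"
    proof (rule sum_mono)
      fix i assume "i \<in> I"
      then have "v i j < d" using vI \<open>j < D\<close> by (auto simp: PiE_iff)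
      then show "w i * v i j \<le> w i * (d-1)" by (intro mult_left_mono) auto
    qed
    also have "\<dots> = W * (d-1)" unfolding W_def by (simp add: sum_distrib_right)
    finally show "(\<Sum>i\<in>I. w i * v i j) < B" using lt by linarith
  qed
  have br: "\<forall>j<D. W * u j < B"
  proof (intro allI impI)
    fix j assume "j < D"
    then have "u j < d" using uV by (auto simp: PiE_iff)
    then have "W * u j \<le> W * (d-1)" by (intro mult_left_mono) auto
    then show "W * u j < B" using lt by linarith
  qed
  have key: "\<forall>j<D. (\<Sum>i\<in>I. w i * v i j) = W * u j"
  proof -
    have "(\<Sum>j<D. (\<Sum>i\<in>I. w i * v i j) * B^j) = (\<Sum>j<D. (W * u j) * B^j)"
      using eq L R W_def by simp
    then show ?thesis using digits_unique[OF bl br] by blast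
  qed
  have Z: "(\<Sum>i\<in>I. int (w i) * (\<Sum>j<D. (int (v i j) - int (u j))^2)) = 0"
    using sphere_identity[OF fI sph] key W_def by simp
  have nn: "\<forall>i\<in>I. 0 \<le> int (w i) * (\<Sum>j<D. (int (v i j) - int (u j))^2)"
    by (simp add: sum_nonneg)
  have each: "\<forall>i\<in>I. int (w i) * (\<Sum>j<D. (int (v i j) - int (u j))^2) = 0"
  proof -
    have "(\<Sum>i\<in>I. int (w i) * (\<Sum>j<D. (int (v i j) - int (u j))^2)) = 0 \<longleftrightarrow>
      (\<forall>i\<in>I. int (w i) * (\<Sum>j<D. (int (v i j) - int (u j))^2) = 0)"
      by (rule sum_nonneg_eq_0_iff[OF fI]) (use nn in simp)
    then show ?thesis using Z by simp
  qed
  show ?thesis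
  proof (intro ballI impI)
    fix i assume iI: "i \<in> I" and wi: "w i > 0"
    have "int (w i) * (\<Sum>j<D. (int (v i j) - int (u j))^2) = 0" using each iI by blast
    then have "(\<Sum>j<D. (int (v i j) - int (u j))^2) = 0" using wi by simp
    moreover have "(\<Sum>j<D. (int (v i j) - int (u j))^2) = 0 \<longleftrightarrow> (\<forall>j\<in>{..<D}. (int (v i j) - int (u j))^2 = 0)"
      by (rule sum_nonneg_eq_0_iff) auto
    ultimately have "\<forall>j\<in>{..<D}. (int (v i j) - int (u j))^2 = 0" by simp
    then have "\<forall>j\<in>{..<D}. v i j = u j" by simp
    moreover have "v i \<in> PiE {..<D} (\<lambda>_. {..<d})" using vI iI by simp
    ultimately show "v i = u" using uV by (intro PiE_ext) auto
  qed
qed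

definition conv_set :: "nat set \<Rightarrow> bool" where
  "conv_set X \<longleftrightarrow> (\<forall>(I::nat set) (w::nat\<Rightarrow>nat) f z. finite I \<longrightarrow> (\<forall>i\<in>I. f i \<in> X) \<longrightarrow> z \<in> X \<longrightarrow>
     (\<Sum>i\<in>I. w i) \<le> 12 \<longrightarrow> (\<Sum>i\<in>I. w i * f i) = (\<Sum>i\<in>I. w i) * z \<longrightarrow> (\<forall>i\<in>I. w i > 0 \<longrightarrow> f i = z))"

lemma conv_set_enc:
  fixes B D d r :: nat
  assumes d1: "d \<ge> 1" and Bd: "12 * d \<le> B"
  shows "conv_set (enc B D ` {v \<in> PiE {..<D} (\<lambda>_. {..<d}). (\<Sum>j<D. (v j)^2) = r})"
  unfolding conv_set_def
proof (intro allI impI)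
  define V where "V = {v \<in> PiE {..<D} (\<lambda>_. {..<d}). (\<Sum>j<D. (v j)^2) = r}"
  fix I :: "nat set" and w :: "nat \<Rightarrow> nat" and f z
  assume fI: "finite I" and fX: "\<forall>i\<in>I. f i \<in> enc B D ` {v \<in> PiE {..<D} (\<lambda>_. {..<d}). (\<Sum>j<D. (v j)^2) = r}"
    and zX: "z \<in> enc B D ` {v \<in> PiE {..<D} (\<lambda>_. {..<d}). (\<Sum>j<D. (v j)^2) = r}"
    and W12: "(\<Sum>i\<in>I. w i) \<le> 12" and eq: "(\<Sum>i\<in>I. w i * f i) = (\<Sum>i\<in>I. w i) * z"
  define v where "v i = inv_into V (enc B D) (f i)" for i
  obtain u where uV: "u \<in> V" and zu: "z = enc B D u" using zX unfolding V_def by blast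
  have vV: "\<forall>i\<in>I. v i \<in> V \<and> enc B D (v i) = f i"
  proof
    fix i assume "i \<in> I"
    then have "f i \<in> enc B D ` V" using fX unfolding V_def by blast
    then show "v i \<in> V \<and> enc B D (v i) = f i" unfolding v_def by (simp add: inv_into_into f_inv_into_f)
  qed
  have B0: "B > 0" using d1 Bd by linarith
  have Bd': "(\<Sum>i\<in>I. w i) * d \<le> B" using W12 Bd by (meson le_trans mult_le_mono1)
  have eq': "(\<Sum>i\<in>I. w i * enc B D (v i)) = (\<Sum>i\<in>I. w i) * enc B D u"
  proof -
    have "(\<Sum>i\<in>I. w i * enc B D (v i)) = (\<Sum>i\<in>I. w i * f i)" using vV by (intro sum.cong) auto
    then show ?thesis using eq zu by simp
  qed
  have "\<forall>i\<in>I. w i > 0 \<longrightarrow> v i = u"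
    by (rule behrend[OF fI _ _ _ _ Bd' B0 d1 eq']) (use vV uV in \<open>auto simp: V_def\<close>)
  then show "\<forall>i\<in>I. w i > 0 \<longrightarrow> f i = z" using vV zu by metis
qed


lemma L1:
  fixes d :: "nat \<Rightarrow> int" and a :: "nat \<Rightarrow> nat"
  assumes cX: "conv_set X" and inj: "inj_on a {..<n}" and aX: "\<forall>i<n. a i \<in> X"
    and db: "\<forall>i<n. \<bar>d i\<bar> \<le> 6" and s0: "(\<Sum>i<n. d i) = 0" and s1: "(\<Sum>i<n. d i * int (a i)) = 0"
    and cP: "card {i. i < n \<and> d i > 0} \<le> 1"
  shows "\<forall>i<n. d i = 0"
proof -
  define P where "P = {i. i < n \<and> d i > 0}"
  have fP: "finite P" unfolding P_def by simp
  have "P = {} \<or> (\<exists>z. P = {z})"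
  proof (cases "card P = 0")
    case True then show ?thesis using fP by simp
  next
    case False
    then have "card P = 1" using cP unfolding P_def by linarith
    then show ?thesis by (meson card_1_singletonE)
  qed
  then show ?thesis
  proof
    assume "P = {}"
    then have nz: "\<forall>i\<in>{..<n}. 0 \<le> - d i" unfolding P_def by force
    have "(\<Sum>i<n. - d i) = 0" using s0 by (simp add: sum_negf)
    moreover have "(\<Sum>i<n. - d i) = 0 \<longleftrightarrow> (\<forall>i\<in>{..<n}. - d i = 0)"
      by (rule sum_nonneg_eq_0_iff) (use nz in auto)
    ultimately show ?thesis by simp
  next
    assume "\<exists>z. P = {z}"
    then obtain z where Pz: "P = {z}" by blast
    then have zn: "z < n" and dz: "d z > 0" unfolding P_def by auto
    have neg: "\<forall>i<n. i \<noteq> z \<longrightarrow> d i \<le> 0"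
    proof (intro allI impI)
      fix i assume "i < n" "i \<noteq> z"
      then have "i \<notin> P" using Pz by simp
      then show "d i \<le> 0" using \<open>i < n\<close> unfolding P_def by simp
    qed
    define I where "I = {..<n} - {z}"
    define w where "w i = nat (- d i)" for i
    have fI: "finite I" unfolding I_def by simp
    have wi: "\<forall>i\<in>I. int (w i) = - d i" unfolding w_def I_def using neg by auto
    have e0: "(\<Sum>i<n. d i) = d z + (\<Sum>i\<in>I. d i)" unfolding I_def using zn by (simp add: sum.remove)
    have e1: "(\<Sum>i<n. d i * int (a i)) = d z * int (a z) + (\<Sum>i\<in>I. d i * int (a i))"
      unfolding I_def using zn by (simp add: sum.remove)
    have W: "int (\<Sum>i\<in>I. w i) = d z"
    proof -
      have "int (\<Sum>i\<in>I. w i) = (\<Sum>i\<in>I. - d i)" using wi by simp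
      then show ?thesis using e0 s0 by (simp add: sum_negf)
    qed
    have WA: "int (\<Sum>i\<in>I. w i * a i) = d z * int (a z)"
    proof -
      have "int (\<Sum>i\<in>I. w i * a i) = (\<Sum>i\<in>I. - d i * int (a i))" using wi by simp
      then show ?thesis using e1 s1 by (simp add: sum_negf)
    qed
    have eqn: "(\<Sum>i\<in>I. w i * a i) = (\<Sum>i\<in>I. w i) * a z"
    proof -
      have "int (\<Sum>i\<in>I. w i * a i) = int ((\<Sum>i\<in>I. w i) * a z)" using WA W by simp
      then show ?thesis by (simp only: of_nat_eq_iff)
    qed
    have W12: "(\<Sum>i\<in>I. w i) \<le> 12"
    proof -
      have "\<bar>d z\<bar> \<le> 6" using db zn by simp
      then have "int (\<Sum>i\<in>I. w i) \<le> 12" using W by linarith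
      then show ?thesis by linarith
    qed
    have fX: "\<forall>i\<in>I. a i \<in> X" using aX unfolding I_def by auto
    have "\<forall>i\<in>I. w i > 0 \<longrightarrow> a i = a z"
      using cX fI fX aX zn W12 eqn unfolding conv_set_def by blast
    then have w0: "\<forall>i\<in>I. w i = 0"
    proof (intro ballI)
      fix i assume h: "\<forall>i\<in>I. w i > 0 \<longrightarrow> a i = a z" and iI: "i \<in> I"
      show "w i = 0"
      proof (rule ccontr)
        assume "w i \<noteq> 0"
        then have "a i = a z" using h iI by simp
        then have "i = z" using inj iI zn unfolding I_def by (auto dest: inj_onD)
        then show False using iI unfolding I_def by simp
      qed
    qed
    then have "(\<Sum>i\<in>I. w i) = 0" by simp
    then have "d z = 0" using W by simp
    moreover have "\<forall>i\<in>I. d i = 0" using w0 wi by force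
    ultimately show ?thesis unfolding I_def by auto
  qed
qed


lemma conv_setD:
  assumes "conv_set X" "finite (I::nat set)" "\<forall>i\<in>I. f i \<in> X" "z \<in> X" "(\<Sum>i\<in>I. w i) \<le> 12"
    "(\<Sum>i\<in>I. w i * f i) = (\<Sum>i\<in>I. w i) * z"
  shows "\<forall>i\<in>I. w i > 0 \<longrightarrow> f i = z"
  using assms unfolding conv_set_def by blast

lemma conv_int:
  assumes cX: "conv_set X"
  shows "\<forall>c1 c2 x y z. x \<in> int ` X \<longrightarrow> y \<in> int ` X \<longrightarrow> z \<in> int ` X \<longrightarrow> 0 \<le> c1 \<longrightarrow> 0 \<le> c2 \<longrightarrow>
        c1 + c2 \<le> 12 \<longrightarrow> (c1+c2)*z = c1*x + c2*y \<longrightarrow> 0 < c1 \<longrightarrow> x = z"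
proof (intro allI impI)
  fix c1 c2 :: int and x y z
  assume x: "x \<in> int ` X" and y: "y \<in> int ` X" and z: "z \<in> int ` X" and c1: "0 \<le> c1" and c2: "0 \<le> c2"
    and c12: "c1 + c2 \<le> 12" and eq: "(c1+c2)*z = c1*x + c2*y" and c1p: "0 < c1"
  obtain x' y' z' where xyz: "x = int x'" "y = int y'" "z = int z'" "x' \<in> X" "y' \<in> X" "z' \<in> X"
    using x y z by blast
  obtain a b where ab: "c1 = int a" "c2 = int b" using c1 c2 by (metis nonneg_int_cases)
  define f where "f i = (if i = (0::nat) then x' else y')" for i
  define w where "w i = (if i = (0::nat) then a else b)" for i
  have s1: "(\<Sum>i\<in>{0::nat,1}. w i) = a + b" unfolding w_def by simp
  have s2: "(\<Sum>i\<in>{0::nat,1}. w i * f i) = a * x' + b * y'" unfolding w_def f_def by simp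
  have "int ((a + b) * z') = int (a * x' + b * y')" using eq xyz ab by simp
  then have e: "(a + b) * z' = a * x' + b * y'" by (simp only: of_nat_eq_iff)
  have "a + b \<le> 12" using c12 ab by simp
  have "\<forall>i\<in>{0::nat,1}. f i \<in> X" unfolding f_def using xyz by simp
  have "\<forall>i\<in>{0::nat,1}. w i > 0 \<longrightarrow> f i = z'"
  proof -
    have fin: "finite {0::nat,1}" by simp
    have eqw: "(\<Sum>i\<in>{0::nat,1}. w i * f i) = (\<Sum>i\<in>{0::nat,1}. w i) * z'" by (simp only: s1 s2 e)
    have w12: "(\<Sum>i\<in>{0::nat,1}. w i) \<le> 12" by (simp only: s1 \<open>a + b \<le> 12\<close>)
    show ?thesis by (rule conv_setD[OF cX fin \<open>\<forall>i\<in>{0::nat,1}. f i \<in> X\<close> xyz(6) w12 eqw])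
  qed
  then have "x' = z'" using c1p ab unfolding w_def f_def by simp
  then show "x = z" using xyz by simp
qed

lemma sum_abs_le:
  fixes kp km :: int
  assumes eB: "e \<in> errball n 2 kp km" and k: "kp \<le> 3" "km \<le> 3" "0 \<le> km"
  shows "(\<Sum>i<n. \<bar>e i\<bar>) \<le> 6"
proof -
  define A where "A = {i. i < n \<and> e i \<noteq> 0}"
  have cA: "card A \<le> 2" using eB unfolding errball_def hwt_def A_def by simp
  have eb: "\<forall>i<n. \<bar>e i\<bar> \<le> 3" using eB k unfolding errball_def by force
  have "(\<Sum>i<n. \<bar>e i\<bar>) = (\<Sum>i\<in>A. \<bar>e i\<bar>)"
    by (rule sum.mono_neutral_right) (auto simp: A_def)
  also have "\<dots> \<le> (\<Sum>i\<in>A. 3)" by (rule sum_mono) (use eb in \<open>auto simp: A_def\<close>)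
  also have "\<dots> = 3 * int (card A)" by simp
  also have "\<dots> \<le> 6" using cA by simp
  finally show ?thesis .
qed


lemma in123: "(1::int) \<le> t \<Longrightarrow> t \<le> 3 \<Longrightarrow> t \<in> {1,2,3}" by auto

lemma inj_core:
  fixes kp km :: int and e e' :: "nat \<Rightarrow> int" and a :: "nat \<Rightarrow> nat" and p M :: nat and i0 :: int
  assumes pp: "prime p" and p3: "p mod 3 = 2" and ii: "[i0^2 = -1] (mod int p)"
    and cX: "conv_set X" and inj: "inj_on a {..<n}" and aX: "\<forall>i<n. a i \<in> X" and aM: "\<forall>i<n. a i < M"
    and pM: "12 * M < p" and M1: "M \<ge> 1"
    and k: "0 \<le> km" "km \<le> kp" "kp \<le> 3"
    and eB: "e \<in> errball n 2 kp km" and eB': "e' \<in> errball n 2 kp km"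
    and s0: "13 dvd (\<Sum>i<n. e i - e' i)"
    and s1: "int p dvd (\<Sum>i<n. (e i - e' i) * int (a i))"
    and s2: "int p dvd (\<Sum>i<n. (e i - e' i) * int (a i)^2)"
  shows "\<forall>i<n. e i = e' i"
proof -
  define d where "d i = e i - e' i" for i
  have p12: "int p > 12" using pM M1 by linarith
  have eb: "\<forall>i<n. \<bar>e i\<bar> \<le> 3" using eB k unfolding errball_def by force
  have eb': "\<forall>i<n. \<bar>e' i\<bar> \<le> 3" using eB' k unfolding errball_def by force
  have db: "\<forall>i<n. \<bar>d i\<bar> \<le> 6" using eb eb' unfolding d_def by force
  have sa: "(\<Sum>i<n. \<bar>e i\<bar>) \<le> 6" using sum_abs_le[OF eB] k by simp
  have sa': "(\<Sum>i<n. \<bar>e' i\<bar>) \<le> 6" using sum_abs_le[OF eB'] k by simp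
  have sd: "(\<Sum>i<n. \<bar>d i\<bar>) \<le> 12"
  proof -
    have "(\<Sum>i<n. \<bar>d i\<bar>) \<le> (\<Sum>i<n. \<bar>e i\<bar> + \<bar>e' i\<bar>)" unfolding d_def by (rule sum_mono) simp
    also have "\<dots> = (\<Sum>i<n. \<bar>e i\<bar>) + (\<Sum>i<n. \<bar>e' i\<bar>)" by (simp add: sum.distrib)
    finally show ?thesis using sa sa' by linarith
  qed
  have S0: "(\<Sum>i<n. d i) = 0"
  proof (rule dvd_small_zero[of 13])
    show "13 dvd (\<Sum>i<n. d i)" using s0 unfolding d_def .
    have "\<bar>\<Sum>i<n. d i\<bar> \<le> (\<Sum>i<n. \<bar>d i\<bar>)" by (rule sum_abs)
    then show "\<bar>\<Sum>i<n. d i\<bar> < 13" using sd by linarith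
  qed
  have S1: "(\<Sum>i<n. d i * int (a i)) = 0"
  proof (rule dvd_small_zero[of "int p"])
    show "int p dvd (\<Sum>i<n. d i * int (a i))" using s1 unfolding d_def .
    have "\<bar>\<Sum>i<n. d i * int (a i)\<bar> \<le> (\<Sum>i<n. \<bar>d i * int (a i)\<bar>)" by (rule sum_abs)
    also have "\<dots> \<le> (\<Sum>i<n. \<bar>d i\<bar> * int M)"
    proof (rule sum_mono)
      fix i assume "i \<in> {..<n}"
      then have "int (a i) \<le> int M" using aM by (simp add: less_imp_le)
      then show "\<bar>d i * int (a i)\<bar> \<le> \<bar>d i\<bar> * int M" by (simp add: abs_mult mult_left_mono)
    qed
    also have "\<dots> = (\<Sum>i<n. \<bar>d i\<bar>) * int M" by (simp add: sum_distrib_right)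
    also have "\<dots> \<le> 12 * int M" using sd by (intro mult_right_mono) auto
    finally show "\<bar>\<Sum>i<n. d i * int (a i)\<bar> < int p" using pM by linarith
  qed
  have S2: "int p dvd (\<Sum>i<n. d i * int (a i)^2)" using s2 unfolding d_def .
  define P where "P = {i. i < n \<and> d i > 0}"
  define N where "N = {i. i < n \<and> d i < 0}"
  have fP: "finite P" and fN: "finite N" unfolding P_def N_def by auto
  show ?thesis
  proof (cases "card P \<le> 1")
    case True
    then have "\<forall>i<n. d i = 0" using L1[OF cX inj aX db S0 S1] unfolding P_def by blast
    then show ?thesis unfolding d_def by simp
  next
    case cP: False
    show ?thesis
    proof (cases "card N \<le> 1")
      case True
      have db2: "\<forall>i<n. \<bar>- d i\<bar> \<le> 6" using db by simp
      have S0': "(\<Sum>i<n. - d i) = 0" using S0 by (simp add: sum_negf)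
      have S1': "(\<Sum>i<n. - d i * int (a i)) = 0" using S1 by (simp add: sum_negf)
      have "card {i. i < n \<and> - d i > 0} \<le> 1" using True unfolding N_def by simp
      then have "\<forall>i<n. - d i = 0" using L1[OF cX inj aX db2 S0' S1'] by blast
      then show ?thesis unfolding d_def by simp
    next
      case cN: False
      define A where "A = {i. i < n \<and> e i \<noteq> 0}"
      define A' where "A' = {i. i < n \<and> e' i \<noteq> 0}"
      have cA: "card A \<le> 2" using eB unfolding errball_def hwt_def A_def by simp
      have cA': "card A' \<le> 2" using eB' unfolding errball_def hwt_def A'_def by simp
      have fA: "finite A" "finite A'" unfolding A_def A'_def by auto
      have PN: "P \<inter> N = {}" unfolding P_def N_def by auto
      have sub: "P \<union> N \<subseteq> A \<union> A'" unfolding P_def N_def A_def A'_def d_def by auto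
      have c1: "card (P \<union> N) = card P + card N" using PN fP fN by (simp add: card_Un_disjoint)
      have c2: "card (P \<union> N) \<le> card (A \<union> A')" by (rule card_mono) (use fA sub in auto)
      have c3: "card (A \<union> A') + card (A \<inter> A') = card A + card A'" using card_Un_Int[OF fA(1) fA(2)] by linarith
      have cP2: "card P = 2" and cN2: "card N = 2" and cI: "card (A \<inter> A') = 0"
        using c1 c2 c3 cA cA' cP cN by linarith+
      have AA: "A \<inter> A' = {}" using cI fA by simp
      have d3: "\<forall>i\<in>P \<union> N. \<bar>d i\<bar> \<le> 3"
      proof
        fix i assume iPN: "i \<in> P \<union> N"
        then have iA: "i \<in> A \<union> A'" using sub by blast
        have iN: "i < n" using iPN unfolding P_def N_def by auto
        show "\<bar>d i\<bar> \<le> 3"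
        proof (cases "i \<in> A")
          case True
          then have "i \<notin> A'" using AA by blast
          then have "e' i = 0" using iN unfolding A'_def by simp
          then show ?thesis using eb iN unfolding d_def by simp
        next
          case False
          then have "e i = 0" using iN unfolding A_def by simp
          then show ?thesis using eb' iN unfolding d_def by simp
        qed
      qed
      obtain i1 i2 where P12: "P = {i1, i2}" "i1 \<noteq> i2" using cP2 by (meson card_2_iff)
      obtain j1 j2 where N12: "N = {j1, j2}" "j1 \<noteq> j2" using cN2 by (meson card_2_iff)
      have dist: "i1 \<noteq> j1" "i1 \<noteq> j2" "i2 \<noteq> j1" "i2 \<noteq> j2" using PN P12 N12 by auto
      have inn: "i1 < n" "i2 < n" "j1 < n" "j2 < n" using P12 N12 unfolding P_def N_def by auto
      have pos: "d i1 > 0" "d i2 > 0" "d j1 < 0" "d j2 < 0" using P12 N12 unfolding P_def N_def by auto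
      have expand: "\<And>g. (\<Sum>i<n. d i * g i) = d i1 * g i1 + d i2 * g i2 + d j1 * g j1 + d j2 * g j2"
      proof -
        fix g :: "nat \<Rightarrow> int"
        have "(\<Sum>i<n. d i * g i) = (\<Sum>i\<in>P \<union> N. d i * g i)"
        proof (rule sum.mono_neutral_right)
          show "finite {..<n}" by simp
          show "P \<union> N \<subseteq> {..<n}" unfolding P_def N_def by auto
          show "\<forall>i\<in>{..<n} - (P \<union> N). d i * g i = 0" unfolding P_def N_def by auto
        qed
        also have "P \<union> N = {i1, i2, j1, j2}" using P12 N12 by auto
        also have "(\<Sum>i\<in>{i1, i2, j1, j2}. d i * g i) = d i1 * g i1 + d i2 * g i2 + d j1 * g j1 + d j2 * g j2"
          using P12(2) N12(2) dist by (simp add: algebra_simps)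
        finally show "(\<Sum>i<n. d i * g i) = d i1 * g i1 + d i2 * g i2 + d j1 * g j1 + d j2 * g j2" .
      qed
      have E0: "d i1 + d i2 + d j1 + d j2 = 0" using S0 expand[of "\<lambda>_. 1"] by simp
      have E1: "d i1 * int (a i1) + d i2 * int (a i2) + d j1 * int (a j1) + d j2 * int (a j2) = 0"
        using S1 expand[of "\<lambda>i. int (a i)"] by simp
      have E2: "int p dvd d i1 * int (a i1)^2 + d i2 * int (a i2)^2 + d j1 * int (a j1)^2 + d j2 * int (a j2)^2"
        using S2 expand[of "\<lambda>i. int (a i)^2"] by simp
      have w3: "\<bar>d i1\<bar> \<le> 3" "\<bar>d i2\<bar> \<le> 3" "\<bar>d j1\<bar> \<le> 3" "\<bar>d j2\<bar> \<le> 3" using d3 P12 N12 by auto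
      have wa: "d i1 \<in> {1,2,3}" "d i2 \<in> {1,2,3}" "- d j1 \<in> {1,2,3}" "- d j2 \<in> {1,2,3}"
        using w3 pos by (auto intro!: in123)
      have sm: "d i1 + d i2 = (- d j1) + (- d j2)" using E0 by simp
      have lin: "d i1 * int (a i1) + d i2 * int (a i2) = (- d j1) * int (a j1) + (- d j2) * int (a j2)"
        using E1 by simp
      have qd: "[d i1 * int (a i1)^2 + d i2 * int (a i2)^2 = (- d j1) * int (a j1)^2 + (- d j2) * int (a j2)^2] (mod int p)"
      proof -
        have "d i1 * int (a i1)^2 + d i2 * int (a i2)^2 - ((- d j1) * int (a j1)^2 + (- d j2) * int (a j2)^2)
          = d i1 * int (a i1)^2 + d i2 * int (a i2)^2 + d j1 * int (a j1)^2 + d j2 * int (a j2)^2" by simp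
        then show ?thesis using E2 by (simp only: cong_iff_dvd_diff)
      qed
      have rng: "0 \<le> int (a i1)" "int (a i1) < int M" "0 \<le> int (a i2)" "int (a i2) < int M"
                "0 \<le> int (a j1)" "int (a j1) < int M" "0 \<le> int (a j2)" "int (a j2) < int M"
        using aM inn by auto
      have pM2: "2 * int M < int p" using pM M1 by linarith
      have ad: "int (a i1) \<noteq> int (a i2)" "int (a i1) \<noteq> int (a j1)" "int (a i1) \<noteq> int (a j2)"
               "int (a i2) \<noteq> int (a j1)" "int (a i2) \<noteq> int (a j2)" "int (a j1) \<noteq> int (a j2)"
        using inj inn P12(2) N12(2) dist by (auto dest: inj_onD)
      have S: "int (a i1) \<in> int ` X" "int (a i2) \<in> int ` X" "int (a j1) \<in> int ` X" "int (a j2) \<in> int ` X"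
        using aX inn by auto
      show ?thesis
        using quad[OF pp p3 p12 ii wa sm lin qd rng pM2 ad S conv_int[OF cX]] by blast
    qed
  qed
qed


definition Lat :: "nat \<Rightarrow> nat \<Rightarrow> (nat \<Rightarrow> nat) \<Rightarrow> (nat \<Rightarrow> int) set" where
  "Lat n p a = {x \<in> zvecs n. 13 dvd (\<Sum>i<n. x i) \<and> int p dvd (\<Sum>i<n. x i * int (a i))
      \<and> int p dvd (\<Sum>i<n. x i * int (a i)^2)}"

definition phi :: "nat \<Rightarrow> nat \<Rightarrow> (nat \<Rightarrow> nat) \<Rightarrow> (nat \<Rightarrow> int) \<Rightarrow> int \<times> int \<times> int" where
  "phi n p a x = ((\<Sum>i<n. x i) mod 13, (\<Sum>i<n. x i * int (a i)) mod int p, (\<Sum>i<n. x i * int (a i)^2) mod int p)"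

lemma sum_vadd_vneg: "(\<Sum>i<n. vadd x (vneg y) i * g i) = (\<Sum>i<n. x i * g i) - (\<Sum>i<n. y i * g i)"
  by (simp add: vadd_def vneg_def algebra_simps sum_subtractf)

lemma sum_vadd_vneg1: "(\<Sum>i<n. vadd x (vneg y) i) = (\<Sum>i<n. x i) - (\<Sum>i<n. y i)"
  by (simp add: vadd_def vneg_def sum_subtractf)

lemma zvecs_vadd_vneg: "x \<in> zvecs n \<Longrightarrow> y \<in> zvecs n \<Longrightarrow> vadd x (vneg y) \<in> zvecs n"
  by (simp add: zvecs_def vadd_def vneg_def)

lemma Lat_iff_phi:
  assumes "x \<in> zvecs n" "y \<in> zvecs n"
  shows "vadd x (vneg y) \<in> Lat n p a \<longleftrightarrow> phi n p a x = phi n p a y"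
proof -
  have "vadd x (vneg y) \<in> Lat n p a \<longleftrightarrow>
     13 dvd (\<Sum>i<n. x i) - (\<Sum>i<n. y i) \<and> int p dvd (\<Sum>i<n. x i * int (a i)) - (\<Sum>i<n. y i * int (a i))
      \<and> int p dvd (\<Sum>i<n. x i * int (a i)^2) - (\<Sum>i<n. y i * int (a i)^2)"
    unfolding Lat_def using zvecs_vadd_vneg[OF assms] by (simp add: sum_vadd_vneg sum_vadd_vneg1)
  also have "\<dots> \<longleftrightarrow> phi n p a x = phi n p a y" unfolding phi_def by (simp add: mod_eq_dvd_iff)
  finally show ?thesis .
qed

lemma Lat_lattice: "is_lattice n (Lat n p a)"
proof -
  have "Lat n p a \<subseteq> zvecs n" unfolding Lat_def by auto
  moreover have "(\<lambda>i. 0) \<in> Lat n p a" unfolding Lat_def zvecs_def by simp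
  moreover have "\<forall>x\<in>Lat n p a. \<forall>y\<in>Lat n p a. vadd x y \<in> Lat n p a"
    unfolding Lat_def zvecs_def vadd_def by (simp add: sum.distrib distrib_right)
  moreover have "\<forall>x\<in>Lat n p a. vneg x \<in> Lat n p a"
    unfolding Lat_def zvecs_def vneg_def by (simp add: sum_negf)
  ultimately show ?thesis unfolding is_lattice_def by blast
qed

lemma Lat_quotient:
  fixes n p :: nat and a :: "nat \<Rightarrow> nat"
  defines "R \<equiv> {(x, y). x \<in> zvecs n \<and> y \<in> zvecs n \<and> vadd x (vneg y) \<in> Lat n p a}"
  assumes p0: "p > 0"
  shows "finite (zvecs n // R)" "card (zvecs n // R) \<le> 13 * p^2" "card (zvecs n // R) \<ge> 1"
proof -
  define g where "g t = {y \<in> zvecs n. phi n p a y = t}" for t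
  have cls: "\<And>x. x \<in> zvecs n \<Longrightarrow> R `` {x} = g (phi n p a x)"
  proof -
    fix x assume xz: "x \<in> zvecs n"
    show "R `` {x} = g (phi n p a x)"
      unfolding R_def g_def using Lat_iff_phi[OF xz] xz by auto
  qed
  have Q: "zvecs n // R = g ` (phi n p a ` zvecs n)"
    unfolding quotient_def using cls by (auto simp: image_iff)
  define G where "G = {0..<(13::int)} \<times> {0..<int p} \<times> {0..<int p}"
  have PG: "phi n p a ` zvecs n \<subseteq> G" unfolding G_def phi_def using p0 by auto
  have fG: "finite G" unfolding G_def by simp
  have cG: "card G = 13 * p^2" unfolding G_def by (simp add: card_cartesian_product power2_eq_square)
  have fin: "finite (phi n p a ` zvecs n)" using finite_subset[OF PG fG] .
  show "finite (zvecs n // R)" unfolding Q using fin by simp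
  have "card (zvecs n // R) \<le> card (phi n p a ` zvecs n)" unfolding Q by (rule card_image_le[OF fin])
  also have "\<dots> \<le> card G" by (rule card_mono[OF fG PG])
  finally show "card (zvecs n // R) \<le> 13 * p^2" using cG by simp
  have "(\<lambda>i. 0) \<in> zvecs n" unfolding zvecs_def by simp
  then have "zvecs n // R \<noteq> {}" unfolding Q by auto
  then show "card (zvecs n // R) \<ge> 1" using \<open>finite (zvecs n // R)\<close> by (simp add: Suc_le_eq card_gt_0_iff)
qed


lemma packing_main:
  fixes kp km :: int and a :: "nat \<Rightarrow> nat" and p M :: nat and i0 :: int
  assumes pp: "prime p" and p3: "p mod 3 = 2" and ii: "[i0^2 = -1] (mod int p)"
    and cX: "conv_set X" and inj: "inj_on a {..<n}" and aX: "\<forall>i<n. a i \<in> X" and aM: "\<forall>i<n. a i < M"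
    and pM: "12 * M < p" and M1: "M \<ge> 1"
    and k: "0 \<le> km" "km \<le> kp" "kp \<le> 3"
  shows "lattice_packing n 2 kp km (Lat n p a) \<and> lattice_index n (Lat n p a) \<le> 13 * p^2
     \<and> lattice_index n (Lat n p a) \<ge> 1"
proof -
  have p0: "p > 0" using pp prime_gt_0_nat by blast
  note Q = Lat_quotient[OF p0, of n a]
  have disj: "\<forall>v\<in>Lat n p a. \<forall>w\<in>Lat n p a. v \<noteq> w \<longrightarrow>
        (vadd v) ` errball n 2 kp km \<inter> (vadd w) ` errball n 2 kp km = {}"
  proof (intro ballI impI)
    fix v w assume vL: "v \<in> Lat n p a" and wL: "w \<in> Lat n p a" and vw: "v \<noteq> w"
    show "(vadd v) ` errball n 2 kp km \<inter> (vadd w) ` errball n 2 kp km = {}"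
    proof (rule ccontr)
      assume "(vadd v) ` errball n 2 kp km \<inter> (vadd w) ` errball n 2 kp km \<noteq> {}"
      then obtain e e' where eB: "e \<in> errball n 2 kp km" and eB': "e' \<in> errball n 2 kp km"
        and eq: "vadd v e = vadd w e'" by blast
      have pt: "\<And>i. e i - e' i = w i - v i"
      proof -
        fix i
        have "v i + e i = w i + e' i" using eq unfolding vadd_def by meson
        then show "e i - e' i = w i - v i" by simp
      qed
      have gen: "\<And>g. (\<Sum>i<n. (e i - e' i) * g i) = (\<Sum>i<n. w i * g i) - (\<Sum>i<n. v i * g i)"
      proof -
        fix g :: "nat \<Rightarrow> int"
        have "(\<Sum>i<n. (e i - e' i) * g i) = (\<Sum>i<n. w i * g i - v i * g i)"
          by (intro sum.cong refl) (simp only: pt left_diff_distrib)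
        then show "(\<Sum>i<n. (e i - e' i) * g i) = (\<Sum>i<n. w i * g i) - (\<Sum>i<n. v i * g i)"
          by (simp add: sum_subtractf)
      qed
      have gen1: "(\<Sum>i<n. (e i - e' i)) = (\<Sum>i<n. w i) - (\<Sum>i<n. v i)"
        using pt by (simp add: sum_subtractf)
      have s0: "13 dvd (\<Sum>i<n. e i - e' i)" using vL wL unfolding gen1 Lat_def by simp
      have s1: "int p dvd (\<Sum>i<n. (e i - e' i) * int (a i))" using vL wL unfolding gen Lat_def by simp
      have s2: "int p dvd (\<Sum>i<n. (e i - e' i) * int (a i)^2)" using vL wL unfolding gen Lat_def by simp
      have "\<forall>i<n. e i = e' i" by (rule inj_core[OF pp p3 ii cX inj aX aM pM M1 k eB eB' s0 s1 s2])
      then have "\<forall>i<n. v i = w i" using pt by (metis eq_iff_diff_eq_0)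
      moreover have "\<forall>i. n \<le> i \<longrightarrow> v i = w i" using vL wL unfolding Lat_def zvecs_def by simp
      ultimately have "v = w" by (metis not_le_imp_less ext)
      then show False using vw by simp
    qed
  qed
  have "lattice_packing n 2 kp km (Lat n p a)"
    unfolding lattice_packing_def finite_index_def using Lat_lattice Q(1) disj by blast
  moreover have "lattice_index n (Lat n p a) \<le> 13 * p^2" unfolding lattice_index_def using Q(2) by simp
  moreover have "lattice_index n (Lat n p a) \<ge> 1" unfolding lattice_index_def using Q(3) by simp
  ultimately show ?thesis by blast
qed


lemma errball_finite: "finite (errball n t kp km)"
proof -
  define h where "h f = (\<lambda>i. if i < n then f i else (0::int))" for f :: "nat \<Rightarrow> int"
  have "errball n t kp km \<subseteq> h ` (PiE {..<n} (\<lambda>_. {-km..kp}))"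
  proof
    fix x assume xB: "x \<in> errball n t kp km"
    have "restrict x {..<n} \<in> PiE {..<n} (\<lambda>_. {-km..kp})" using xB unfolding errball_def by auto
    moreover have "h (restrict x {..<n}) = x" using xB unfolding h_def errball_def zvecs_def by (auto simp: fun_eq_iff)
    ultimately show "x \<in> h ` (PiE {..<n} (\<lambda>_. {-km..kp}))" by (metis image_eqI)
  qed
  moreover have "finite (h ` (PiE {..<n} (\<lambda>_. {-km..kp})))" by (intro finite_imageI finite_PiE) auto
  ultimately show ?thesis by (rule finite_subset)
qed

lemma errball_card:
  fixes kp km :: int
  assumes "1 \<le> kp" "0 \<le> km"
  shows "n choose 2 \<le> card (errball n 2 kp km)"
proof -
  define h where "h S = (\<lambda>i. if i \<in> S then (1::int) else 0)" for S :: "nat set"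
  define F where "F = {S. S \<subseteq> {..<n} \<and> card S = 2}"
  have cF: "card F = n choose 2" unfolding F_def using n_subsets[of "{..<n}" 2] by simp
  have inj: "inj_on h F"
  proof (rule inj_onI)
    fix S S' assume "h S = h S'"
    then have "\<forall>i. (i \<in> S) = (i \<in> S')" unfolding h_def by (metis one_neq_zero)
    then show "S = S'" by blast
  qed
  have sub: "h ` F \<subseteq> errball n 2 kp km"
  proof
    fix x assume "x \<in> h ` F"
    then obtain S where S: "S \<subseteq> {..<n}" "card S = 2" and x: "x = h S" unfolding F_def by blast
    have "x \<in> zvecs n" unfolding x h_def zvecs_def using S(1) by auto
    moreover have "\<forall>i<n. - km \<le> x i \<and> x i \<le> kp" unfolding x h_def using assms by auto
    moreover have "{i. i < n \<and> x i \<noteq> 0} = S" unfolding x h_def using S(1) by auto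
    then have "hwt n x \<le> 2" unfolding hwt_def using S(2) by simp
    ultimately show "x \<in> errball n 2 kp km" unfolding errball_def by blast
  qed
  have "card F \<le> card (errball n 2 kp km)" by (rule card_inj_on_le[OF inj sub errball_finite])
  then show ?thesis using cF by simp
qed

lemma ln2_half: "ln (2::real) \<ge> 1/2"
proof -
  have "exp (1/2::real) * exp (1/2) = exp 1" by (simp add: exp_add[symmetric])
  then have sq: "exp (1/2::real) * exp (1/2) \<le> 3" using exp_le by simp
  have "exp (1/2::real) < 2"
  proof (rule ccontr)
    assume "\<not> exp (1/2::real) < 2"
    then have "2 \<le> exp (1/2::real)" by simp
    then have "2 * 2 \<le> exp (1/2::real) * exp (1/2)" by (intro mult_mono) auto
    then show False using sq by simp
  qed
  then have "ln (exp (1/2::real)) < ln 2" by (subst ln_less_cancel_iff) auto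
  then show ?thesis by simp
qed

lemma choose2_ge: "n \<ge> 2 \<Longrightarrow> n^2 \<le> 4 * (n choose 2)"
proof -
  assume n2: "n \<ge> 2"
  have ev: "even (n * (n - 1))" using n2 by (cases "even n") auto
  have "2 * (n choose 2) = n * (n - 1)"
    unfolding choose_two using dvd_mult_div_cancel[OF ev] by simp
  moreover have "n^2 \<le> 2 * (n * (n - 1))" using n2 by (simp add: power2_eq_square algebra_simps) (cases n; auto)
  ultimately show ?thesis by linarith
qed


lemma dens_nat:
  fixes n D L p :: nat
  assumes n2: "n \<ge> 2" and nL: "2^L \<le> n * 2^(8*D+7)" and pL: "p < 2^(L+1)"
  shows "13 * p^2 \<le> 52 * 2^16 * 2^(16*D) * (n choose 2)"
proof -
  have "p^2 \<le> (2^(L+1))^2" using pL by (intro power_mono) auto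
  also have "(2::nat)^(L+1) = 2 * 2^L" by simp
  also have "(2 * (2::nat)^L)^2 = 4 * (2^L)^2" by (simp add: power2_eq_square)
  also have "((2::nat)^L)^2 \<le> (n * 2^(8*D+7))^2" using nL by (intro power_mono) auto
  also have "(n * 2^(8*D+7))^2 = n^2 * 2^(16*D+14)" by (simp add: power_mult_distrib power_mult[symmetric] mult.commute)
  also have "n^2 * 2^(16*D+14) \<le> 4 * (n choose 2) * 2^(16*D+14)" using choose2_ge[OF n2] by simp
  finally have "p^2 \<le> 4 * (4 * (n choose 2) * 2^(16*D+14))" by simp
  moreover have "4 * (4 * (n choose 2) * 2^(16*D+14)) = 4 * 2^16 * 2^(16*D) * (n choose 2)"
    by (simp add: power_add)
  ultimately have "p^2 \<le> 4 * 2^16 * 2^(16*D) * (n choose 2)" by linarith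
  then show ?thesis by linarith
qed

lemma ln_bound:
  fixes n D L :: nat
  assumes D33: "D \<ge> 33" and LD: "D^2 \<le> L" and nL: "2^L \<le> n * 2^(8*D+7)"
  shows "real D / 2 \<le> sqrt (ln (real n))" and "n \<ge> 2^(D^2 - 8*D - 7)"
proof -
  define E where "E = D^2 - 8*D - 7"
  have DD: "D^2 \<ge> 33 * D" using D33 by (simp add: power2_eq_square)
  have EL: "E + (8*D+7) = D^2" unfolding E_def using DD D33 by linarith
  have "2^E * 2^(8*D+7) \<le> (2::nat)^L" using EL LD by (metis power_add power_increasing_iff one_less_numeral_iff semiring_norm(76))
  then have "2^E * 2^(8*D+7) \<le> n * (2::nat)^(8*D+7)" using nL by linarith
  then have nE: "2^E \<le> n" by simp
  then show "n \<ge> 2^(D^2 - 8*D - 7)" unfolding E_def .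
  have n0: "real n > 0" using nE by (metis less_le_trans of_nat_0_less_iff zero_less_numeral zero_less_power)
  have "ln (2 ^ E :: real) \<le> ln (real n)"
    using nE n0 by (subst ln_le_cancel_iff) (auto simp: of_nat_le_iff[symmetric])
  moreover have "ln (2 ^ E :: real) = real E * ln 2" by (simp add: ln_realpow)
  ultimately have l1: "real E * ln 2 \<le> ln (real n)" by simp
  have "real E * (1/2) \<le> real E * ln 2" using ln2_half by (intro mult_left_mono) auto
  then have l2: "real E / 2 \<le> ln (real n)" using l1 by simp
  have "D^2 \<le> 2 * E" using EL DD D33 by linarith
  then have "real (D^2) \<le> real (2 * E)" by (simp only: of_nat_le_iff)
  then have "real (D^2) / 4 \<le> real E / 2" by simp
  then have "(real D / 2)^2 \<le> ln (real n)" using l2 by (simp add: power_divide)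
  then have "sqrt ((real D / 2)^2) \<le> sqrt (ln (real n))" by (rule real_sqrt_le_mono)
  then show "real D / 2 \<le> sqrt (ln (real n))" by simp
qed

lemma dens_bound:
  fixes n D L p I Ec :: nat
  assumes n2: "n \<ge> 2" and D33: "D \<ge> 33" and LD: "D^2 \<le> L" and nL: "2^L \<le> n * 2^(8*D+7)"
    and pL: "p < 2^(L+1)" and I1: "1 \<le> I" and Ip: "I \<le> 13*p^2" and Ec: "n choose 2 \<le> Ec"
  shows "(1/(52*2^16)) * ((2::real)^32) powr (- sqrt (ln (real n))) \<le> real Ec / real I"
proof -
  define K :: real where "K = 52 * 2^16 * 2^(16*D)"
  have K0: "K > 0" unfolding K_def by simp
  have "I \<le> 52 * 2^16 * 2^(16*D) * (n choose 2)" using dens_nat[OF n2 nL pL] Ip by linarith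
  then have "real I \<le> real (52 * 2^16 * 2^(16*D) * (n choose 2))" by (simp only: of_nat_le_iff)
  also have "\<dots> = K * real (n choose 2)" unfolding K_def by simp
  finally have "real I \<le> K * real (n choose 2)" .
  also have "\<dots> \<le> K * real Ec" using Ec K0 by simp
  finally have IK: "real I \<le> K * real Ec" .
  have I0: "real I > 0" using I1 by simp
  have r1: "1 / K \<le> real Ec / real I" using IK I0 K0 by (simp add: field_simps)
  have s: "real D / 2 \<le> sqrt (ln (real n))" using ln_bound[OF D33 LD nL] by simp
  have e32: "(2::real) powr (32::real) = 2^32" using powr_realpow[of 2 32] by simp
  have "((2::real)^32) powr (- sqrt (ln (real n))) = ((2::real) powr 32) powr (- sqrt (ln (real n)))"
    by (simp only: e32)
  also have "\<dots> = 2 powr (32 * (- sqrt (ln (real n))))" by (simp only: powr_powr)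
  also have "\<dots> \<le> 2 powr (- (16 * real D))" using s by (intro powr_mono) auto
  also have "\<dots> = 1 / 2^(16*D)"
  proof -
    have "(2::real) powr (real (16*D)) = 2^(16*D)" by (rule powr_realpow) simp
    then show ?thesis by (simp add: powr_minus divide_inverse)
  qed
  finally have "((2::real)^32) powr (- sqrt (ln (real n))) \<le> 1 / 2^(16*D)" .
  then have "(1/(52*2^16)) * ((2::real)^32) powr (- sqrt (ln (real n))) \<le> (1/(52*2^16)) * (1 / 2^(16*D))"
    by (intro mult_left_mono) auto
  also have "\<dots> = 1 / K" unfolding K_def by simp
  finally show ?thesis using r1 by linarith
qed

lemma exists_floor_sqrt: "\<exists>D. D^2 \<le> L \<and> L < (D+1)^2" for L :: nat
proof (induction L)
  case 0 show ?case by (rule exI[of _ 0]) simp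
next
  case (Suc L)
  then obtain D where D: "D^2 \<le> L" "L < (D+1)^2" by blast
  show ?case
  proof (cases "Suc L < (D+1)^2")
    case True then show ?thesis using D by (intro exI[of _ D]) simp
  next
    case False
    then have e: "Suc L = (D+1)^2" using D(2) by simp
    have "(D+1)^2 < (D+2)^2" by (simp add: power2_eq_square)
    then show ?thesis using e by (intro exI[of _ "D+1"]) simp
  qed
qed

lemma pigeon:
  fixes V :: "'a set" and f :: "'a \<Rightarrow> nat"
  assumes fV: "finite V" and fR: "\<forall>v\<in>V. f v \<le> R"
  shows "\<exists>r\<le>R. card V \<le> (R+1) * card {v\<in>V. f v = r}"
proof (rule ccontr)
  assume "\<not> (\<exists>r\<le>R. card V \<le> (R+1) * card {v\<in>V. f v = r})"
  then have lt: "\<forall>r\<in>{..R}. (R+1) * card {v\<in>V. f v = r} < card V" by auto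
  have "V = (\<Union>r\<in>{..R}. {v\<in>V. f v = r})" using fR by auto
  moreover have "card (\<Union>r\<in>{..R}. {v\<in>V. f v = r}) \<le> (\<Sum>r\<in>{..R}. card {v\<in>V. f v = r})"
    by (rule card_UN_le) simp
  ultimately have "card V \<le> (\<Sum>r\<in>{..R}. card {v\<in>V. f v = r})" by simp
  then have "(R+1) * card V \<le> (R+1) * (\<Sum>r\<in>{..R}. card {v\<in>V. f v = r})"
    by (rule mult_le_mono2)
  also have "\<dots> = (\<Sum>r\<in>{..R}. (R+1) * card {v\<in>V. f v = r})"
    by (rule sum_distrib_left)
  also have "\<dots> < (\<Sum>r\<in>{..R}. card V)" by (rule sum_strict_mono) (use lt in auto)
  also have "\<dots> = (R+1) * card V" by simp
  finally show False by simp
qed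

lemma enc_inj:
  fixes B D d :: nat
  assumes "d \<le> B"
  shows "inj_on (enc B D) (PiE {..<D} (\<lambda>_. {..<d}))"
proof (rule inj_onI)
  fix v v' assume v: "v \<in> PiE {..<D} (\<lambda>_. {..<d})" and v': "v' \<in> PiE {..<D} (\<lambda>_. {..<d})"
    and eq: "enc B D v = enc B D v'"
  have b1: "\<forall>j<D. v j < B"
  proof (intro allI impI)
    fix j assume "j < D" then have "v j < d" using v by (auto simp: PiE_iff)
    then show "v j < B" using assms by linarith
  qed
  have b2: "\<forall>j<D. v' j < B"
  proof (intro allI impI)
    fix j assume "j < D" then have "v' j < d" using v' by (auto simp: PiE_iff)
    then show "v' j < B" using assms by linarith
  qed
  have "(\<Sum>j<D. v j * B^j) = (\<Sum>j<D. v' j * B^j)" using eq unfolding enc_def .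
  then have "\<forall>j<D. v j = v' j" by (rule digits_unique[OF b1 b2])
  then show "v = v'" using v v' by (intro PiE_ext) auto
qed


lemma family:
  fixes kp km :: int and m :: nat
  assumes k: "0 \<le> km" "km \<le> kp" "kp \<le> 3" and kp1: "1 \<le> kp"
  shows "\<exists>n\<ge>m. \<exists>Lt. lattice_packing n 2 kp km Lt \<and>
     (1/(52*2^16)) * ((2::real)^32) powr (- sqrt (ln (real n))) \<le> packing_density n 2 kp km Lt"
proof -
  define m' where "m' = m + 33"
  obtain p i0 where pp: "prime p" and pbig: "2^(m'^2) < p" and p3: "p mod 3 = 2"
    and ii: "[i0^2 = -1] (mod int p)"
    using good_primes[of "2^(m'^2)"] by blast
  have p1: "1 \<le> p" using pbig by linarith
  obtain L where L: "2^L \<le> p" "p < 2^(L+1)" using ex_power_ivl1[of 2 p] p1 by auto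
  have "(2::nat)^(m'^2) < 2^(L+1)" using pbig L(2) by linarith
  then have "m'^2 < L + 1" using power_less_imp_less_exp[of "2::nat" "m'^2" "L+1"] by linarith
  then have mL: "m'^2 \<le> L" by simp
  obtain D where D: "D^2 \<le> L" "L < (D+1)^2" using exists_floor_sqrt by blast
  have Dm: "m' \<le> D"
  proof (rule ccontr)
    assume "\<not> m' \<le> D"
    then have "D + 1 \<le> m'" by simp
    then have "(D+1)^2 \<le> m'^2" by (rule power_mono) simp
    then show False using mL D(2) by linarith
  qed
  have D33: "D \<ge> 33" and DmM: "D \<ge> m" using Dm unfolding m'_def by auto
  have D0: "D > 0" using D33 by simp
  have DD: "D^2 \<ge> 33 * D" using D33 by (simp add: power2_eq_square)
  define q where "q = (L - 4) div D"
  have q1: "D * q \<le> L - 4" unfolding q_def by (simp add: mult.commute)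
  have q2: "L - 4 < D * (q + 1)"
  proof -
    have "L - 4 = D * q + (L - 4) mod D" unfolding q_def by simp
    moreover have "(L - 4) mod D < D" using D0 by simp
    ultimately show ?thesis by (simp add: algebra_simps)
  qed
  have L4: "L \<ge> 4 * D + 4" using D(1) DD D33 by linarith
  have q4: "q \<ge> 4"
  proof -
    have "4 * D \<le> L - 4" using L4 by linarith
    then have "(4 * D) div D \<le> (L - 4) div D" by (rule div_le_mono)
    then show ?thesis unfolding q_def using D0 by simp
  qed
  have qD: "q \<le> D + 2"
  proof -
    have "D * q < D * (D + 3)"
    proof -
      have "D * q \<le> L - 4" by (rule q1)
      also have "\<dots> < (D+1)^2" using D(2) by linarith
      also have "(D+1)^2 \<le> D * (D + 3)" using D0 by (simp add: power2_eq_square algebra_simps)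
      finally show ?thesis .
    qed
    then have "q < D + 3" by simp
    then show ?thesis by simp
  qed
  define k where "k = q - 4"
  define d :: nat where "d = 2^k"
  define B :: nat where "B = 16 * d"
  define M :: nat where "M = B^D"
  have d1: "d \<ge> 1" unfolding d_def by simp
  have Bd: "12 * d \<le> B" unfolding B_def by simp
  have B2: "B = 2^q"
  proof -
    have "(2::nat)^q = 2^((q-4)+4)" using q4 by simp
    also have "\<dots> = 2^(q-4) * 16" by (simp only: power_add) simp
    finally show ?thesis unfolding B_def d_def k_def by simp
  qed
  have M2: "M = 2^(D*q)" unfolding M_def B2 by (simp add: power_mult[symmetric] mult.commute)
  have M1: "M \<ge> 1" unfolding M2 by simp
  have pM: "12 * M < p"
  proof -
    have "M \<le> 2^(L-4)" unfolding M2 using q1 by (simp add: power_increasing)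
    then have "16 * M \<le> 16 * 2^(L-4)" by simp
    also have "16 * (2::nat)^(L-4) = 2^L"
    proof -
      have "(2::nat)^L = 2^((L-4)+4)" using L4 by simp
      also have "\<dots> = 2^(L-4) * 16" by (simp only: power_add) simp
      finally show ?thesis by simp
    qed
    finally show ?thesis using L(1) M1 by linarith
  qed
  define V where "V = PiE {..<D} (\<lambda>_. {..<d})"
  define R where "R = D * (d - 1)^2"
  have fV: "finite V" unfolding V_def by (simp add: finite_PiE)
  have cV: "card V = d^D" unfolding V_def by (simp add: card_PiE)
  have fR: "\<forall>v\<in>V. (\<Sum>j<D. (v j)^2) \<le> R"
  proof
    fix v assume "v \<in> V"
    then have "\<forall>j<D. v j < d" unfolding V_def by (auto simp: PiE_iff)
    then have "\<forall>j<D. v j \<le> d - 1" by (metis Suc_pred' d1 less_Suc_eq_le less_le_trans zero_less_one)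
    then have "(\<Sum>j<D. (v j)^2) \<le> (\<Sum>j<D. (d - 1)^2)" by (intro sum_mono power_mono) auto
    then show "(\<Sum>j<D. (v j)^2) \<le> R" unfolding R_def by simp
  qed
  obtain r where r: "r \<le> R" "card V \<le> (R+1) * card {v\<in>V. (\<Sum>j<D. (v j)^2) = r}"
    using pigeon[OF fV fR] by blast
  define Vr where "Vr = {v\<in>V. (\<Sum>j<D. (v j)^2) = r}"
  define X where "X = enc B D ` Vr"
  have injV: "inj_on (enc B D) Vr"
    using enc_inj[of d B D] Bd unfolding Vr_def V_def by (auto intro: inj_on_subset)
  define n where "n = card X"
  have nVr: "n = card Vr" unfolding n_def X_def using card_image[OF injV] .
  have fX: "finite X" unfolding X_def Vr_def using fV by simp
  have cX: "conv_set X" unfolding X_def Vr_def V_def using conv_set_enc[OF d1 Bd] by simp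
  have XM: "\<forall>x\<in>X. x < M"
  proof
    fix x assume "x \<in> X"
    then obtain v where v: "v \<in> V" "x = enc B D v" unfolding X_def Vr_def by auto
    have "\<forall>j<D. v j < B" using v(1) Bd unfolding V_def by (force simp: PiE_iff)
    then show "x < M" unfolding M_def v(2) by (rule enc_lt)
  qed
  have R1: "R + 1 \<le> 2^(D + 2*k)"
  proof -
    have "(d-1)^2 + 1 \<le> d^2" using d1 by (cases d) (auto simp: power2_eq_square)
    have "D * (d-1)^2 + 1 \<le> D * ((d-1)^2 + 1)" using D0 by (simp add: algebra_simps)
    also have "\<dots> \<le> D * d^2" using \<open>(d-1)^2 + 1 \<le> d^2\<close> by (rule mult_le_mono2)
    also have "D * d^2 \<le> 2^D * d^2" by (intro mult_le_mono1 less_imp_le less_exp)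
    also have "2^D * d^2 = 2^(D + 2*k)" unfolding d_def by (simp add: power_add power_mult[symmetric] mult.commute)
    finally show ?thesis unfolding R_def .
  qed
  have nb: "2^(k*D) \<le> n * 2^(D + 2*k)"
  proof -
    have "2^(k*D) = card V" unfolding cV d_def by (simp add: power_mult)
    also have "\<dots> \<le> (R+1) * n" using r(2) unfolding nVr Vr_def .
    also have "\<dots> \<le> 2^(D + 2*k) * n" using R1 by (rule mult_le_mono1)
    finally show ?thesis by (simp add: mult.commute)
  qed
  have Lk: "L \<le> k*D + 5*D + 3"
  proof -
    have "k * D = D * q - 4 * D" unfolding k_def by (simp add: algebra_simps diff_mult_distrib)
    moreover have "D * q \<ge> 4 * D" using q4 by simp
    ultimately show ?thesis using q2 by (simp add: algebra_simps)
  qed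
  have nL: "2^L \<le> n * 2^(8*D+7)"
  proof -
    have "(2::nat)^L \<le> 2^(k*D + 5*D + 3)" using Lk by (simp add: power_increasing)
    also have "\<dots> = 2^(k*D) * 2^(5*D+3)" by (simp add: power_add)
    also have "\<dots> \<le> n * 2^(D + 2*k) * 2^(5*D+3)" using nb by simp
    also have "\<dots> = n * 2^(D + 2*k + (5*D+3))" by (simp only: power_add mult.assoc)
    also have "\<dots> \<le> n * 2^(8*D+7)"
    proof -
      have "D + 2*k + (5*D+3) \<le> 8*D+7" using qD unfolding k_def by linarith
      then show ?thesis by (intro mult_le_mono2 power_increasing) auto
    qed
    finally show ?thesis .
  qed
  have nE: "n \<ge> 2^(D^2 - 8*D - 7)" using ln_bound(2)[OF D33 D(1) nL] .
  have EE: "D^2 - 8*D - 7 \<ge> D" using DD D33 by linarith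
  have "D < 2^(D^2 - 8*D - 7)" using EE by (meson less_exp le_less_trans less_le_trans power_increasing_iff one_less_numeral_iff semiring_norm(76))
  then have nD: "n > D" using nE by linarith
  have n2: "n \<ge> 2" using nD D33 by linarith
  have nm: "n \<ge> m" using nD DmM by linarith
  obtain a where a: "bij_betw a {0..<card X} X" using ex_bij_betw_nat_finite[OF fX] by blast
  have inj: "inj_on a {..<n}" using a unfolding n_def bij_betw_def by (simp add: atLeast0LessThan)
  have aX: "\<forall>i<n. a i \<in> X" using a unfolding n_def bij_betw_def by auto
  have aM: "\<forall>i<n. a i < M" using aX XM by blast
  have PM: "lattice_packing n 2 kp km (Lat n p a) \<and> lattice_index n (Lat n p a) \<le> 13 * p^2
     \<and> lattice_index n (Lat n p a) \<ge> 1"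
    by (rule packing_main[OF pp p3 ii cX inj aX aM pM M1 k])
  have Ec: "n choose 2 \<le> card (errball n 2 kp km)" using errball_card kp1 k(1) by blast
  have "(1/(52*2^16)) * ((2::real)^32) powr (- sqrt (ln (real n))) \<le>
     real (card (errball n 2 kp km)) / real (lattice_index n (Lat n p a))"
    using dens_bound[OF n2 D33 D(1) nL L(2)] PM Ec by blast
  then have "(1/(52*2^16)) * ((2::real)^32) powr (- sqrt (ln (real n))) \<le> packing_density n 2 kp km (Lat n p a)"
    unfolding packing_density_def .
  then show ?thesis using PM nm by blast
qed


theorem corollary9:
  fixes kp km :: int
  assumes "0 \<le> km" and "km \<le> kp" and "kp \<le> 3" and "kp + km \<ge> 1"
  shows "\<exists>c::real. c > 0 \<and> (\<exists>N::nat set. infinite N \<and>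
           (\<exists>C::real. C > 0 \<and> (\<exists>n0::nat. \<forall>n\<in>N. n \<ge> n0 \<longrightarrow>
              (\<exists>L. lattice_packing n 2 kp km L \<and>
                   packing_density n 2 kp km L \<ge> C * c powr (- sqrt (ln (real n)))))))"
proof -
  have kp1: "1 \<le> kp" using assms by linarith
  define C :: real where "C = 1/(52*2^16)"
  define c :: real where "c = 2^32"
  define N where "N = {n. \<exists>L. lattice_packing n 2 kp km L \<and>
                   packing_density n 2 kp km L \<ge> C * c powr (- sqrt (ln (real n)))}"
  have "\<forall>m. \<exists>n\<ge>m. n \<in> N"
  proof
    fix m
    show "\<exists>n\<ge>m. n \<in> N" using family[OF assms(1-3) kp1, of m] unfolding N_def C_def c_def by blast
  qed
  then have inf: "infinite N" by (simp add: infinite_nat_iff_unbounded_le)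
  have "c > 0" "C > 0" unfolding c_def C_def by auto
  moreover have "\<forall>n\<in>N. n \<ge> 0 \<longrightarrow> (\<exists>L. lattice_packing n 2 kp km L \<and>
                   packing_density n 2 kp km L \<ge> C * c powr (- sqrt (ln (real n))))"
    unfolding N_def by blast
  ultimately show ?thesis using inf by blast
qed

end
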